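(* For all $n\in\mathbb N$, \[ L^n(J)-L_0^n(J)=\sum_{j=0}^{n-1}L^j(\eta_{n-j}),\qquad\text{where }\eta_n:=L\big(L_0^{n-1}(J)\big)-L_0^n(J), \] and $\eta_n$ satisfies \[ \eta_n=\sum_{s=0}^\infty\alpha(n-1,s)\Big[\frac1N\mathrm{diag}(Q^s)+\mathrm{diag}\big(Q\,\mathrm{diag}(Q^s)J\big)-\frac{2\,\mathrm{tr}(Q^s)}{N^2}I-\frac1N\mathrm{diag}(Q^s)Q-\frac1NQ\,\mathrm{diag}(Q^s)+\frac{2\,\mathrm{tr}(Q^s)}{N^2}Q\Big]. \]
   Context: $E$ is a finite set with $N=\#E>8$ elements, listed in a fixed order; $\mathsf M_E$ is the space of complex $N\times N$ matrices indexed by $E\times E$; $|x\rangle,\langle x|$ are standard unit column/row vectors, $C^*$ is transpose. $Q$ is an irreducible stochastic matrix on $E$ with $Q(x,y)=Q(y,x)$ for all $x,y$ and $\mathrm{tr}(Q)=0$. $I$ is the identity, $J$ the matrix with all entries $1/N$, $\mathrm{diag}(C)=\sum_x|x\rangle\langle x|C|x\rangle\langle x|$. Let $(U,V)$ be random with $\mathbb P(U=x,V=y)=\frac1NQ(x,y)$, $T=I-|U\rangle\langle U|+|U\rangle\langle V|$, and $L(C)=\mathbb E[T^*CT]$. $L_0(C)=\frac{N-2}NC+\frac1N(CQ+QC)-\frac{2\,\mathrm{tr}(C)}{N^2}Q+\frac{2\,\mathrm{tr}(C)}{N^2}I$. Powers of $L$, $L_0$ are compositions ($L^0=L_0^0=$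 identity). The function $\alpha:\mathbb Z_+\times\mathbb Z_+\to\mathbb R$ is defined by $\alpha(0,s)=0$ and, for $n\in\mathbb Z_+$, $\alpha(n+1,0)=\frac2{N^2}+\alpha(n,0)+\frac2{N^2}\sum_{s\ge1}\alpha(n,s)\mathrm{tr}(Q^s)$, $\alpha(n+1,1)=-\frac2{N^2}+\frac{N-2}N\alpha(n,1)-\frac2{N^2}\sum_{s\ge1}\alpha(n,s)\mathrm{tr}(Q^s)$, $\alpha(n+1,s)=\frac{N-2}N\alpha(n,s)+\frac2N\alpha(n,s-1)$ for $s\ge2$ (so $\alpha(n,s)=0$ for $s\ge n+1$). *)

theory Defs
  imports "HOL-Analysis.Analysis"
begin

text \<open>Matrices indexed by the finite type 'e (playing the role of E), entries complex.
  Q is a real matrix; its complex version is cmat Q.\<close>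

primrec matpow :: "'a::semiring_1^'e^'e \<Rightarrow> nat \<Rightarrow> 'a^'e^'e" where
  "matpow A 0 = mat 1"
| "matpow A (Suc k) = matpow A k ** A"

definition cmat :: "real^'e^'e \<Rightarrow> complex^'e^'e" where
  "cmat A = (\<chi> i j. complex_of_real (A $ i $ j))"

definition cscale :: "complex \<Rightarrow> complex^'e^'e \<Rightarrow> complex^'e^'e" where
  "cscale c A = (\<chi> i j. c * A $ i $ j)"

definition stochastic :: "real^'e^'e \<Rightarrow> bool" where
  "stochastic Q \<longleftrightarrow> (\<forall>x y. Q $ x $ y \<ge> 0) \<and> (\<forall>x. (\<Sum>y\<in>UNIV. Q $ x $ y) = 1)"

definition irreducible_mat :: "real^'e^'e \<Rightarrow> bool" where
  "irreducible_mat Q \<longleftrightarrow> (\<forall>x y. \<exists>k. matpow Q k $ x $ y > 0)"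

definition ketbra :: "'e \<Rightarrow> 'e \<Rightarrow> complex^'e^'e" where
  "ketbra x y = (\<chi> i j. if i = x \<and> j = y then 1 else 0)"

definition Jmat :: "complex^'e^'e" where
  "Jmat = (\<chi> i j. 1 / of_nat CARD('e))"

definition diagm :: "complex^'e^'e \<Rightarrow> complex^'e^'e" where
  "diagm C = (\<Sum>x\<in>UNIV. ketbra x x ** C ** ketbra x x)"

text \<open>T for the outcome (U,V) = (x,y).\<close>
definition Tmat :: "'e \<Rightarrow> 'e \<Rightarrow> complex^'e^'e" where
  "Tmat x y = mat 1 - ketbra x x + ketbra x y"

text \<open>L(C) = E[T^* C T], with P(U=x,V=y) = Q(x,y)/N.\<close>
definition Lop :: "real^'e^'e \<Rightarrow> complex^'e^'e \<Rightarrow> complex^'e^'e" where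
  "Lop Q C = (\<Sum>x\<in>UNIV. \<Sum>y\<in>UNIV.
      (Q $ x $ y / real CARD('e)) *\<^sub>R (transpose (Tmat x y) ** C ** Tmat x y))"

definition L0op :: "real^'e^'e \<Rightarrow> complex^'e^'e \<Rightarrow> complex^'e^'e" where
  "L0op Q C = (let N = real CARD('e) in
      ((N - 2) / N) *\<^sub>R C + (1 / N) *\<^sub>R (C ** cmat Q + cmat Q ** C)
      - cscale (2 * trace C / of_real (N^2)) (cmat Q)
      + cscale (2 * trace C / of_real (N^2)) (mat 1))"

primrec alpha :: "real^'e^'e \<Rightarrow> nat \<Rightarrow> nat \<Rightarrow> real" where
  "alpha Q 0 = (\<lambda>s. 0)"
| "alpha Q (Suc n) = (\<lambda>s. let N = real CARD('e);
       S = (\<Sum>t. alpha Q n (Suc t) * trace (matpow Q (Suc t))) in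
     if s = 0 then 2 / N^2 + alpha Q n 0 + 2 / N^2 * S
     else if s = 1 then - 2 / N^2 + (N - 2) / N * alpha Q n 1 - 2 / N^2 * S
     else (N - 2) / N * alpha Q n s + 2 / N * alpha Q n (s - 1))"

definition eta :: "real^'e^'e \<Rightarrow> nat \<Rightarrow> complex^'e^'e" where
  "eta Q n = Lop Q ((L0op Q ^^ (n - 1)) Jmat) - (L0op Q ^^ n) Jmat"

definition bracket :: "real^'e^'e \<Rightarrow> nat \<Rightarrow> complex^'e^'e" where
  "bracket Q s = (let N = real CARD('e); Qs = cmat (matpow Q s);
       t = trace (matpow Q s) in
     (1 / N) *\<^sub>R diagm Qs + diagm (cmat Q ** diagm Qs ** Jmat)
     - (2 * t / N^2) *\<^sub>R mat 1 - (1 / N) *\<^sub>R (diagm Qs ** cmat Q)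
     - (1 / N) *\<^sub>R (cmat Q ** diagm Qs) + (2 * t / N^2) *\<^sub>R cmat Q)"

end

theory Submission
  imports Defs
begin


definition dl :: "'e::finite \<Rightarrow> 'e \<Rightarrow> complex" where "dl a b = (if a = b then 1 else 0)"
lemma dl_sym: "dl a b = dl b a" by (simp add: dl_def)

lemma sc: "r *\<^sub>R (z::complex) = of_real r * z" by (simp add: scaleR_conv_of_real)

lemma Tmat_nth: "Tmat x y $ i $ j = dl i j - dl i x * dl j x + dl i x * dl j y"
  by (simp add: Tmat_def ketbra_def mat_def dl_def)

lemma sum_dl1: "(\<Sum>l\<in>(UNIV::'e::finite set). f l * dl l a) = f a"
proof -
  have "(\<Sum>l\<in>UNIV. f l * dl l a) = (\<Sum>l\<in>UNIV. if l = a then f l else 0)"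
    by (rule sum.cong) (auto simp: dl_def)
  then show ?thesis by (simp add: sum.delta)
qed
lemma sum_dl2: "(\<Sum>l\<in>UNIV. dl l a * f l) = f a"
  using sum_dl1[of f a] by (simp add: mult.commute)
lemma sum_dl3: "(\<Sum>l\<in>UNIV. f l * dl a l) = f a"
  using sum_dl1[of f a] by (simp add: dl_sym)
lemma sum_dl4: "(\<Sum>l\<in>UNIV. dl a l * f l) = f a"
  using sum_dl2[of a f] by (simp add: dl_sym)
lemma ketbra_dl: "ketbra x y $ i $ j = dl i x * dl j y"
  by (simp add: ketbra_def dl_def)

lemma mul_T: "(M ** Tmat x y) $ k $ j = M$k$j + M$k$x * (dl y j - dl x j)"
proof -
  have "(M ** Tmat x y) $ k $ j = (\<Sum>l\<in>UNIV. M$k$l * dl l j) - (\<Sum>l\<in>UNIV. (M$k$l * dl j x) * dl l x)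
      + (\<Sum>l\<in>UNIV. (M$k$l * dl j y) * dl l x)"
    by (simp add: matrix_matrix_mult_def Tmat_nth algebra_simps sum.distrib sum_subtractf)
  also have "\<dots> = M$k$j + M$k$x * (dl y j - dl x j)"
    by (simp only: sum_dl1) (simp add: dl_def algebra_simps)
  finally show ?thesis .
qed

lemma T_mul: "(transpose (Tmat x y) ** M) $ i $ j = M$i$j + (dl y i - dl x i) * M$x$j"
proof -
  have "(transpose (Tmat x y) ** M) $ i $ j = (\<Sum>l\<in>UNIV. dl l i * M$l$j) - (\<Sum>l\<in>UNIV. dl l x * (dl i x * M$l$j))
      + (\<Sum>l\<in>UNIV. dl l x * (dl i y * M$l$j))"
    by (simp add: matrix_matrix_mult_def transpose_def Tmat_nth algebra_simps sum.distrib sum_subtractf)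
  also have "\<dots> = M$i$j + (dl y i - dl x i) * M$x$j"
    by (simp only: sum_dl2) (simp add: dl_def algebra_simps)
  finally show ?thesis .
qed

lemma TCT: "(transpose (Tmat x y) ** C ** Tmat x y) $ i $ j = C$i$j + C$i$x * (dl y j - dl x j) + (dl y i - dl x i) * (C$x$j + C$x$x * (dl y j - dl x j))"
  by (simp add: mul_T T_mul algebra_simps)

lemma kb_mul: "(M ** ketbra x x) $ i $ j = M$i$x * dl j x"
  by (simp add: matrix_matrix_mult_def ketbra_dl mult.assoc[symmetric] sum_distrib_right[symmetric] sum_dl1)
lemma mul_kb: "(ketbra x x ** M) $ i $ j = dl i x * M$x$j"
  by (simp add: matrix_matrix_mult_def ketbra_dl mult.assoc sum_distrib_left[symmetric] sum_dl2)

lemma diagm_nth: "diagm C $ i $ j = (if i = j then C$i$i else 0)"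
proof -
  have "diagm C $ i $ j = (\<Sum>x\<in>UNIV. dl i x * (dl j x * C$x$x))"
    by (simp add: diagm_def kb_mul mul_kb algebra_simps)
  also have "\<dots> = (if i = j then C$i$i else 0)" by (simp only: sum_dl4) (simp add: dl_def)
  finally show ?thesis .
qed


lemma Lop_nth:
  fixes Q :: "real^'e^'e" and C :: "complex^'e^'e"
  assumes sym: "\<forall>x y. Q$x$y = Q$y$x" and rows: "\<forall>x. (\<Sum>y\<in>UNIV. Q$x$y) = 1"
  shows "Lop Q C $ i $ j = of_real (1 / real CARD('e)) * (of_nat CARD('e) * C$i$j - 2 * C$i$j
     + (\<Sum>k\<in>UNIV. C$i$k * of_real (Q$k$j)) + (\<Sum>k\<in>UNIV. of_real (Q$i$k) * C$k$j)
     + dl i j * ((\<Sum>k\<in>UNIV. of_real (Q$i$k) * C$k$k) + C$i$i) - of_real (Q$i$j) * (C$i$i + C$j$j))"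
proof -
  define q where "q a b = complex_of_real (Q$a$b)" for a b
  have rq: "(\<Sum>y\<in>UNIV. q x y) = 1" for x
    using rows by (simp add: q_def flip: of_real_sum)
  have sq: "q a b = q b a" for a b using sym by (simp add: q_def)
  have inner: "(\<Sum>y\<in>UNIV. q x y * ((transpose (Tmat x y) ** C ** Tmat x y) $ i $ j))
     = (C$i$j - C$i$x*dl x j - dl x i * C$x$j + dl x i * C$x$x * dl x j) + (C$i$x - C$x$x * dl x i) * q x j
       + (C$x$j - C$x$x * dl x j) * q x i + C$x$x * q x i * dl i j" for x
  proof -
    have "(\<Sum>y\<in>UNIV. q x y * ((transpose (Tmat x y) ** C ** Tmat x y) $ i $ j))
      = (\<Sum>y\<in>UNIV. q x y) * (C$i$j - C$i$x*dl x j - dl x i * C$x$j + dl x i * C$x$x * dl x j)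
        + (\<Sum>y\<in>UNIV. q x y * dl y j) * (C$i$x - C$x$x * dl x i)
        + (\<Sum>y\<in>UNIV. q x y * dl y i) * (C$x$j - C$x$x * dl x j)
        + (\<Sum>y\<in>UNIV. (q x y * dl y j) * dl y i) * C$x$x"
      by (simp add: TCT algebra_simps sum.distrib sum_subtractf sum_distrib_left sum_distrib_right)
    also have "\<dots> = (C$i$j - C$i$x*dl x j - dl x i * C$x$j + dl x i * C$x$x * dl x j) + (C$i$x - C$x$x * dl x i) * q x j
       + (C$x$j - C$x$x * dl x j) * q x i + C$x$x * q x i * dl i j"
      by (simp only: rq sum_dl1) (simp add: algebra_simps dl_sym)
    finally show ?thesis .
  qed
  have "Lop Q C $ i $ j = of_real (1 / real CARD('e)) *
      (\<Sum>x\<in>UNIV. \<Sum>y\<in>UNIV. q x y * ((transpose (Tmat x y) ** C ** Tmat x y) $ i $ j))"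
    unfolding Lop_def by (simp only: sum_component vector_scaleR_component) (simp add: scaleR_conv_of_real sum_distrib_left q_def algebra_simps)
  also have "(\<Sum>x\<in>UNIV. \<Sum>y\<in>UNIV. q x y * ((transpose (Tmat x y) ** C ** Tmat x y) $ i $ j))
     = (\<Sum>x\<in>(UNIV::'e set). C$i$j) - (\<Sum>x\<in>UNIV. C$i$x*dl x j) - (\<Sum>x\<in>UNIV. dl x i * C$x$j)
       + (\<Sum>x\<in>UNIV. dl x i * (C$x$x * dl x j)) + (\<Sum>x\<in>UNIV. C$i$x * q x j) - (\<Sum>x\<in>UNIV. dl x i * (C$x$x * q x j))
       + (\<Sum>x\<in>UNIV. C$x$j * q x i) - (\<Sum>x\<in>UNIV. C$x$x * q x i * dl x j) + (\<Sum>x\<in>UNIV. C$x$x * q x i) * dl i j"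
    by (simp only: inner) (simp add: algebra_simps sum.distrib sum_subtractf sum_distrib_left sum_distrib_right)
  also have "\<dots> = of_nat CARD('e) * C$i$j - C$i$j - C$j$i * 0 - C$i$j + dl i j * C$i$i + (\<Sum>x\<in>UNIV. C$i$x * q x j)
     - C$i$i * q i j + (\<Sum>x\<in>UNIV. q i x * C$x$j) - C$j$j * q i j + (\<Sum>x\<in>UNIV. q i x * C$x$x) * dl i j"
    by (simp only: sum_dl1 sum_dl2) (simp add: sq mult.commute)
  finally show ?thesis by (simp add: q_def algebra_simps)
qed


lemma L0op_nth:
  fixes Q :: "real^'e^'e" and C :: "complex^'e^'e"
  shows "L0op Q C $ i $ j = of_real ((real CARD('e) - 2) / real CARD('e)) * C$i$j
    + of_real (1 / real CARD('e)) * ((\<Sum>k\<in>UNIV. C$i$k * of_real (Q$k$j)) + (\<Sum>k\<in>UNIV. of_real (Q$i$k) * C$k$j))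
    - 2 * trace C / of_real (real CARD('e) ^ 2) * of_real (Q$i$j) + 2 * trace C / of_real (real CARD('e) ^ 2) * dl i j"
  by (simp add: L0op_def Let_def cscale_def cmat_def matrix_matrix_mult_def mat_def dl_def sc)

lemma Delta_nth:
  fixes Q :: "real^'e^'e" and C :: "complex^'e^'e"
  assumes sym: "\<forall>x y. Q$x$y = Q$y$x" and rows: "\<forall>x. (\<Sum>y\<in>UNIV. Q$x$y) = 1"
  shows "(Lop Q C - L0op Q C) $ i $ j = of_real (1 / real CARD('e)) * (dl i j * ((\<Sum>k\<in>UNIV. of_real (Q$i$k) * C$k$k) + C$i$i)
     - of_real (Q$i$j) * (C$i$i + C$j$j)) + 2 * trace C / of_real (real CARD('e) ^ 2) * (of_real (Q$i$j) - dl i j)"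
proof -
  have N: "real CARD('e) \<noteq> 0" by simp
  show ?thesis
    apply (simp only: vector_minus_component Lop_nth[OF sym rows] L0op_nth)
    using N by (simp add: field_simps)
qed

lemma Lop_linear:
  fixes Q :: "real^'e^'e"
  assumes sym: "\<forall>x y. Q$x$y = Q$y$x" and rows: "\<forall>x. (\<Sum>y\<in>UNIV. Q$x$y) = 1"
  shows "linear (Lop Q)"
proof (rule linearI)
  fix b1 b2 :: "complex^'e^'e"
  show "Lop Q (b1 + b2) = Lop Q b1 + Lop Q b2"
    by (simp add: vec_eq_iff Lop_nth[OF sym rows] algebra_simps sum.distrib)
next
  fix r and b :: "complex^'e^'e"
  show "Lop Q (r *\<^sub>R b) = r *\<^sub>R Lop Q b"
    by (simp add: vec_eq_iff Lop_nth[OF sym rows] sc algebra_simps sum_distrib_left)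
qed

lemma L0op_linear:
  fixes Q :: "real^'e^'e"
  shows "linear (L0op Q)"
proof (rule linearI)
  fix b1 b2 :: "complex^'e^'e"
  show "L0op Q (b1 + b2) = L0op Q b1 + L0op Q b2"
    by (simp add: vec_eq_iff L0op_nth trace_add sum.distrib field_simps)
next
  fix r and b :: "complex^'e^'e"
  have "trace (r *\<^sub>R b) = of_real r * trace b"
    by (simp add: trace_def sc sum_distrib_left)
  then show "L0op Q (r *\<^sub>R b) = r *\<^sub>R L0op Q b"
    by (simp add: vec_eq_iff L0op_nth sc algebra_simps sum_distrib_left)
qed


lemma diagm_nth': "diagm C $ i $ j = dl i j * C$i$i"
  by (simp add: diagm_nth dl_def)

lemma diagm_mul: "(diagm C ** M) $ i $ j = C$i$i * M$i$j"
  by (simp add: matrix_matrix_mult_def diagm_nth' mult.assoc sum_dl4)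
lemma mul_diagm: "(M ** diagm C) $ i $ j = M$i$j * C$j$j"
proof -
  have "(M ** diagm C) $ i $ j = (\<Sum>k\<in>UNIV. (M$i$k * C$k$k) * dl k j)"
    by (simp add: matrix_matrix_mult_def diagm_nth' algebra_simps)
  then show ?thesis by (simp only: sum_dl1)
qed

lemma trace_cmat: "trace (cmat M) = of_real (trace M)"
  by (simp add: trace_def cmat_def)

lemma cmat_nth: "cmat M $ i $ j = of_real (M$i$j)"
  by (simp add: cmat_def)

lemma Delta_J:
  fixes Q :: "real^'e^'e"
  assumes sym: "\<forall>x y. Q$x$y = Q$y$x" and rows: "\<forall>x. (\<Sum>y\<in>UNIV. Q$x$y) = 1"
  shows "Lop Q Jmat - L0op Q Jmat = 0"
proof -
  have N: "real CARD('e) \<noteq> 0" by simp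
  have rq: "(\<Sum>k\<in>UNIV. complex_of_real (Q$i$k)) = 1" for i
    using rows by (simp flip: of_real_sum)
  have tr: "trace (Jmat :: complex^'e^'e) = 1" by (simp add: trace_def Jmat_def)
  have s: "(\<Sum>k\<in>UNIV. complex_of_real (Q$i$k) / of_nat CARD('e)) = 1 / of_nat CARD('e)" for i
    by (simp add: sum_divide_distrib[symmetric] rq)
  show ?thesis
    apply (simp only: vec_eq_iff Delta_nth[OF sym rows] tr)
    apply (simp add: Jmat_def s)
    using N by (simp add: field_simps dl_def power2_eq_square)
qed

lemma Delta_bracket:
  fixes Q :: "real^'e^'e"
  assumes sym: "\<forall>x y. Q$x$y = Q$y$x" and rows: "\<forall>x. (\<Sum>y\<in>UNIV. Q$x$y) = 1"
  shows "Lop Q (cmat (matpow Q s)) - L0op Q (cmat (matpow Q s)) = bracket Q s"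
proof -
  have N: "real CARD('e) \<noteq> 0" by simp
  have e: "(cmat Q ** diagm (cmat (matpow Q s)) ** Jmat) $ i $ i =
     (\<Sum>k\<in>UNIV. of_real (Q$i$k) * cmat (matpow Q s) $ k $ k) / of_nat CARD('e)" for i
    unfolding matrix_matrix_mult_def[of "cmat Q ** diagm (cmat (matpow Q s))" Jmat]
    by (simp add: mul_diagm Jmat_def sum_divide_distrib cmat_nth)
  show ?thesis
    apply (simp only: vec_eq_iff Delta_nth[OF sym rows] trace_cmat)
    apply (simp add: bracket_def Let_def diagm_nth' e diagm_mul mul_diagm sc cmat_nth)
    using N apply (simp add: field_simps dl_def power2_eq_square mat_def)
    done
qed


lemma alpha_zero: "m < s \<Longrightarrow> alpha Q m s = 0"
proof (induction m arbitrary: s)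
  case 0 then show ?case by simp
next
  case (Suc m)
  then show ?case by (simp add: Let_def)
qed

lemma alpha_S: "(\<Sum>t. alpha Q m (Suc t) * trace (matpow Q (Suc t))) = (\<Sum>t<m. alpha Q m (Suc t) * trace (matpow Q (Suc t)))"
  by (rule suminf_finite) (auto simp: alpha_zero)

lemma alpha_Suc_form:
  fixes Q :: "real^'e^'e" and m s :: nat
  defines "N \<equiv> real CARD('e)"
  defines "K \<equiv> 2 / N^2 + 2 / N * alpha Q m 0 + 2 / N^2 * (\<Sum>t. alpha Q m (Suc t) * trace (matpow Q (Suc t)))"
  shows "alpha Q (Suc m) s = (N - 2) / N * alpha Q m s + (if s = 0 then 0 else 2 / N * alpha Q m (s - 1))
     + (if s = 0 then K else if s = 1 then - K else 0)"
proof -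
  have N: "N \<noteq> 0" by (simp add: N_def)
  show ?thesis
    using N by (auto simp: Let_def K_def N_def[symmetric] field_simps)
qed

lemma matpow_comm: "matpow Q s ** Q = Q ** matpow Q s"
proof (induction s)
  case 0 then show ?case by simp
next
  case (Suc s)
  have "matpow Q (Suc s) ** Q = (Q ** matpow Q s) ** Q" by (simp add: Suc.IH)
  also have "\<dots> = Q ** matpow Q (Suc s)" by (simp add: matrix_mul_assoc)
  finally show ?case .
qed

lemma cmat_mult: "cmat (A ** B) = cmat A ** cmat B"
  by (simp add: vec_eq_iff cmat_def matrix_matrix_mult_def)

lemma cmat_one: "cmat (mat 1) = mat 1"
  by (simp add: vec_eq_iff cmat_def mat_def)

lemma cscale_real: "cscale (of_real r) M = r *\<^sub>R M"
  by (simp add: vec_eq_iff cscale_def sc)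

lemma L0_P:
  fixes Q :: "real^'e^'e"
  defines "N \<equiv> real CARD('e)"
  shows "L0op Q (cmat (matpow Q s)) = ((N - 2) / N) *\<^sub>R cmat (matpow Q s) + (2 / N) *\<^sub>R cmat (matpow Q (Suc s))
     - (2 * trace (matpow Q s) / N^2) *\<^sub>R cmat Q + (2 * trace (matpow Q s) / N^2) *\<^sub>R mat 1"
proof -
  have 1: "cmat (matpow Q s) ** cmat Q = cmat (matpow Q (Suc s))" by (simp add: cmat_mult)
  have 2: "cmat Q ** cmat (matpow Q s) = cmat (matpow Q (Suc s))" by (simp add: cmat_mult[symmetric] matpow_comm)
  have 3: "2 * trace (cmat (matpow Q s)) / of_real (N^2) = complex_of_real (2 * trace (matpow Q s) / N^2)"
    by (simp add: trace_cmat)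
  have 4: "(1 / N) *\<^sub>R (X + X) = (2 / N) *\<^sub>R X" for X :: "complex^'e^'e"
    by (simp add: scaleR_add_right[symmetric] scaleR_2[symmetric] )
  show ?thesis
    unfolding L0op_def Let_def N_def[symmetric] 1 2 3 cscale_real 4 ..
qed

lemma QJ:
  fixes Q :: "real^'e^'e"
  assumes sym: "\<forall>x y. Q$x$y = Q$y$x" and rows: "\<forall>x. (\<Sum>y\<in>UNIV. Q$x$y) = 1"
  shows "cmat Q ** Jmat = Jmat" "Jmat ** cmat Q = Jmat"
proof -
  have rq: "(\<Sum>k\<in>UNIV. complex_of_real (Q$i$k)) = 1" for i
    using rows by (simp flip: of_real_sum)
  have rq2: "(\<Sum>k\<in>UNIV. complex_of_real (Q$k$i)) = 1" for i
    using rq[of i] sym by simp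
  show "cmat Q ** Jmat = Jmat"
    by (simp add: vec_eq_iff matrix_matrix_mult_def cmat_def Jmat_def sum_divide_distrib[symmetric] rq)
  show "Jmat ** cmat Q = Jmat"
    by (simp add: vec_eq_iff matrix_matrix_mult_def cmat_def Jmat_def sum_divide_distrib[symmetric] rq2)
qed

lemma L0_J:
  fixes Q :: "real^'e^'e"
  assumes sym: "\<forall>x y. Q$x$y = Q$y$x" and rows: "\<forall>x. (\<Sum>y\<in>UNIV. Q$x$y) = 1"
  defines "N \<equiv> real CARD('e)"
  shows "L0op Q Jmat = Jmat + (2 / N^2) *\<^sub>R cmat (mat 1) - (2 / N^2) *\<^sub>R cmat Q"
proof -
  have N: "N \<noteq> 0" by (simp add: N_def)
  have tr: "trace (Jmat :: complex^'e^'e) = 1" by (simp add: trace_def Jmat_def)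
  have 3: "2 * trace (Jmat :: complex^'e^'e) / of_real (N^2) = complex_of_real (2 / N^2)"
    by (simp add: tr)
  have 4: "((N - 2) / N) *\<^sub>R Jmat + (1 / N) *\<^sub>R (Jmat + Jmat) = (Jmat :: complex^'e^'e)"
  proof -
    have "((N - 2) / N) *\<^sub>R Jmat + (1 / N) *\<^sub>R (Jmat + Jmat) = ((N - 2) / N + 2 / N) *\<^sub>R (Jmat :: complex^'e^'e)"
      by (simp add: scaleR_add_right[symmetric] scaleR_2[symmetric] scaleR_add_left)
    also have "(N - 2) / N + 2 / N = 1" using N by (simp add: field_simps)
    finally show ?thesis by simp
  qed
  show ?thesis
    unfolding L0op_def Let_def N_def[symmetric] QJ[OF sym rows] 3 cscale_real 4 cmat_one by simp
qed


lemma rearr: "(x::'a::real_vector) + c *\<^sub>R v + (A + B + s *\<^sub>R v) = x + (A + B + (c + s) *\<^sub>R v)"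
  by (simp add: algebra_simps)

lemma L0pow:
  fixes Q :: "real^'e^'e"
  assumes sym: "\<forall>x y. Q$x$y = Q$y$x" and rows: "\<forall>x. (\<Sum>y\<in>UNIV. Q$x$y) = 1"
  shows "(L0op Q ^^ m) Jmat = Jmat + (\<Sum>s\<le>m. alpha Q m s *\<^sub>R cmat (matpow Q s))"
proof (induction m)
  case 0 then show ?case by simp
next
  case (Suc m)
  define N where "N = real CARD('e)"
  define a where "a = alpha Q m"
  define P where "P s = cmat (matpow Q s)" for s
  define c where "c s = 2 * trace (matpow Q s) / N^2" for s
  define S where "S = (\<Sum>t. alpha Q m (Suc t) * trace (matpow Q (Suc t)))"
  define K where "K = 2 / N^2 + 2 / N * alpha Q m 0 + 2 / N^2 * S"
  have N: "N \<noteq> 0" by (simp add: N_def)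
  have lin: "linear (L0op Q)" by (rule L0op_linear)
  have P1: "P 1 = cmat Q" by (simp add: P_def)
  have P0: "P 0 = mat 1" by (simp add: P_def cmat_one)
  have P0': "cmat (mat 1) = P 0" by (simp add: P_def)
  have "(L0op Q ^^ Suc m) Jmat = L0op Q Jmat + (\<Sum>s\<le>m. a s *\<^sub>R L0op Q (P s))"
    by (simp add: Suc.IH linear_add[OF lin] linear_sum[OF lin] linear_scale[OF lin] a_def P_def)
  also have "\<dots> = Jmat + (2 / N^2) *\<^sub>R (P 0 - P 1) + ((\<Sum>s\<le>m. ((N - 2) / N * a s) *\<^sub>R P s)
      + (\<Sum>s\<le>m. (2 / N * a s) *\<^sub>R P (Suc s)) + (\<Sum>s\<le>m. a s * c s) *\<^sub>R (P 0 - P 1))"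
  proof -
    have e: "a s *\<^sub>R L0op Q (P s) = ((N - 2) / N * a s) *\<^sub>R P s + (2 / N * a s) *\<^sub>R P (Suc s)
       + (a s * c s) *\<^sub>R (P 0 - P 1)" for s
      unfolding P_def L0_P N_def[symmetric] c_def
      by (simp add: cmat_one algebra_simps)
    have j: "L0op Q Jmat = Jmat + (2 / N^2) *\<^sub>R (P 0 - P 1)"
      unfolding L0_J[OF sym rows] N_def[symmetric] P1[symmetric] P0' scaleR_diff_right by (rule add_diff_eq[symmetric])
    have z: "(\<Sum>s\<le>m. (a s * c s) *\<^sub>R (P 0 - P 1)) = (\<Sum>s\<le>m. a s * c s) *\<^sub>R (P 0 - P 1)"
      by (rule scaleR_sum_left[symmetric])
    show ?thesis
      unfolding e sum.distrib j z by (rule refl)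
  qed
  also have "\<dots> = Jmat + (\<Sum>s\<le>Suc m. alpha Q (Suc m) s *\<^sub>R P s)"
  proof -
    have form: "alpha Q (Suc m) s *\<^sub>R P s = ((N - 2) / N * a s) *\<^sub>R P s
       + (if s = 0 then 0 else 2 / N * a (s - 1)) *\<^sub>R P s
       + (if s = 0 then K else if s = 1 then - K else 0) *\<^sub>R P s" for s
      unfolding alpha_Suc_form[of Q m s] a_def K_def S_def N_def scaleR_add_left ..
    have s1: "(\<Sum>s\<le>Suc m. ((N - 2) / N * a s) *\<^sub>R P s) = (\<Sum>s\<le>m. ((N - 2) / N * a s) *\<^sub>R P s)"
      by (simp add: a_def alpha_zero)
    have s2: "(\<Sum>s\<le>Suc m. (if s = 0 then 0 else 2 / N * a (s - 1)) *\<^sub>R P s) = (\<Sum>s\<le>m. (2 / N * a s) *\<^sub>R P (Suc s))"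
      by (simp add: sum.atMost_shift lessThan_Suc_atMost)
    have s3: "(\<Sum>s\<le>Suc m. (if s = 0 then K else if s = 1 then - K else 0) *\<^sub>R P s) = K *\<^sub>R (P 0 - P 1)"
    proof -
      have "(\<Sum>s\<le>Suc m. (if s = 0 then K else if s = 1 then - K else 0) *\<^sub>R P s)
          = K *\<^sub>R P 0 + (- K) *\<^sub>R P 1"
        by (simp add: sum.atMost_shift sum.lessThan_Suc_shift del: sum.lessThan_Suc)
      also have "\<dots> = K *\<^sub>R (P 0 - P 1)" by (simp add: scaleR_diff_right)
      finally show ?thesis .
    qed
    have sac: "(\<Sum>s\<le>m. a s * c s) = 2 / N * alpha Q m 0 + 2 / N^2 * S"
    proof -
      have "(\<Sum>s\<le>m. a s * c s) = a 0 * c 0 + (\<Sum>t<m. a (Suc t) * c (Suc t))"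
        by (simp add: sum.atMost_shift)
      also have "a 0 * c 0 = 2 / N * alpha Q m 0"
        using N by (simp add: a_def c_def trace_I N_def[symmetric] power2_eq_square)
      also have "(\<Sum>t<m. a (Suc t) * c (Suc t)) = 2 / N^2 * S"
        unfolding S_def alpha_S sum_distrib_left a_def c_def by (rule sum.cong) (simp_all add: field_simps)
      finally show ?thesis .
    qed
    have K: "K = 2 / N^2 + (\<Sum>s\<le>m. a s * c s)" unfolding sac K_def by simp
    show ?thesis
      unfolding form sum.distrib s1 s2 s3 unfolding K by (rule rearr)
  qed
  finally show ?case by (simp add: P_def)
qed





lemma funpow_linear:
  fixes f :: "'a::real_vector \<Rightarrow> 'a"
  shows "linear f \<Longrightarrow> linear (f ^^ j)"
proof (induction j)
  case 0
  have "f ^^ 0 = id" by (rule ext) simp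
  then show ?case by (simp add: linear_iff)
next
  case (Suc j)
  then have "linear (f \<circ> (f ^^ j))" by (intro linear_compose) auto
  then show ?case by (simp add: comp_def)
qed

lemma D_linear:
  fixes Q :: "real^'e^'e"
  assumes sym: "\<forall>x y. Q$x$y = Q$y$x" and rows: "\<forall>x. (\<Sum>y\<in>UNIV. Q$x$y) = 1"
  shows "linear (\<lambda>C. Lop Q C - L0op Q C)"
  by (rule linear_compose_sub[OF Lop_linear[OF sym rows] L0op_linear])



theorem lemma4p7:
  fixes Q :: "real^'e^'e" and n :: nat
  assumes "CARD('e) > 8"
    and "stochastic Q" and "irreducible_mat Q"
    and "\<forall>x y. Q $ x $ y = Q $ y $ x"
    and "trace Q = 0"
    and "n \<ge> 1"
  shows "(Lop Q ^^ n) Jmat - (L0op Q ^^ n) Jmat = (\<Sum>j<n. (Lop Q ^^ j) (eta Q (n - j)))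
    \<and> eta Q n = (\<Sum>s. alpha Q (n - 1) s *\<^sub>R bracket Q s)"
proof
  have sym: "\<forall>x y. Q$x$y = Q$y$x" using assms(4) .
  have rows: "\<forall>x. (\<Sum>y\<in>UNIV. Q$x$y) = 1" using assms(2) by (simp add: stochastic_def)
  have linL: "linear (Lop Q)" by (rule Lop_linear[OF sym rows])
  define f where "f k = (Lop Q ^^ k) ((L0op Q ^^ (n - k)) Jmat)" for k
  have "(\<Sum>j<n. (Lop Q ^^ j) (eta Q (n - j))) = (\<Sum>j<n. f (Suc j) - f j)"
  proof (rule sum.cong)
    fix j assume "j \<in> {..<n}"
    then have j: "j < n" by simp
    have e: "eta Q (n - j) = Lop Q ((L0op Q ^^ (n - Suc j)) Jmat) - (L0op Q ^^ (n - j)) Jmat"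
      unfolding eta_def Suc_eq_plus1 diff_diff_left ..
    show "(Lop Q ^^ j) (eta Q (n - j)) = f (Suc j) - f j"
      unfolding e linear_diff[OF funpow_linear[OF linL]] f_def funpow_Suc_right by simp
  qed simp
  also have "\<dots> = f n - f 0" by (rule sum_lessThan_telescope)
  also have "f n - f 0 = (Lop Q ^^ n) Jmat - (L0op Q ^^ n) Jmat"
    unfolding f_def diff_self_eq_0 funpow_0 minus_nat.diff_0 ..
  finally show "(Lop Q ^^ n) Jmat - (L0op Q ^^ n) Jmat = (\<Sum>j<n. (Lop Q ^^ j) (eta Q (n - j)))"
    by (rule HOL.sym)
next
  have sym: "\<forall>x y. Q$x$y = Q$y$x" using assms(4) .
  have rows: "\<forall>x. (\<Sum>y\<in>UNIV. Q$x$y) = 1" using assms(2) by (simp add: stochastic_def)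
  obtain m where n: "n = Suc m" using assms(6) by (cases n) auto
  have linD: "linear (\<lambda>C. Lop Q C - L0op Q C)" by (rule D_linear[OF sym rows])
  have "eta Q n = Lop Q ((L0op Q ^^ m) Jmat) - L0op Q ((L0op Q ^^ m) Jmat)"
    by (simp add: eta_def n)
  also have "\<dots> = (Lop Q Jmat - L0op Q Jmat) + (\<Sum>s\<le>m. alpha Q m s *\<^sub>R (Lop Q (cmat (matpow Q s)) - L0op Q (cmat (matpow Q s))))"
    unfolding L0pow[OF sym rows] linear_add[OF linD] linear_sum[OF linD] linear_scale[OF linD] ..
  also have "\<dots> = (\<Sum>s\<le>m. alpha Q m s *\<^sub>R bracket Q s)"
    by (simp add: Delta_J[OF sym rows] Delta_bracket[OF sym rows])
  also have "\<dots> = (\<Sum>s. alpha Q (n - 1) s *\<^sub>R bracket Q s)"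
    unfolding n diff_Suc_1 by (rule suminf_finite[symmetric]) (auto simp: alpha_zero)
  finally show "eta Q n = (\<Sum>s. alpha Q (n - 1) s *\<^sub>R bracket Q s)" .
qed


end
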